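(* Let $M_1>0$, $M_2>0$. Let $F(z)=|z|^2G(z)+H(z)$, $z\in\mathbb{D}$, where $G,H$ are analytic in $\mathbb{D}$ with $G(0)=H(0)=0$, $G'(0)=H'(0)=1$, $|G(z)|\leq M_1$ and $|H(z)|\leq M_2$ for all $z\in\mathbb{D}$. Let $\rho_3$ be the unique root in $(0,1)$ of the equation $$1-\Big(M_2-\frac{1}{M_2}\Big)\frac{2r-r^2}{(1-r)^2}-\Big(M_1-\frac{1}{M_1}\Big)\frac{(3-2r)r^2}{(1-r)^2}-2r=0,$$ and $$\sigma_3=\rho_3-\rho_3^2-\Big(M_2-\frac{1}{M_2}\Big)\frac{\rho_3^2}{1-\rho_3}-\Big(M_1-\frac{1}{M_1}\Big)\frac{\rho_3^3}{1-\rho_3}.$$ Then $F$ is univalent in $\mathbb{D}_{\rho_3}$ and $F(\mathbb{D}_{\rho_3})\supseteq\mathbb{D}_{\sigma_3}$.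
   Context: $\mathbb{D}=\{z:|z|<1\}$ and $\mathbb{D}_r=\{z\in\mathbb{C}:|z|<r\}$. *)

theory Defs
  imports "HOL-Complex_Analysis.Complex_Analysis"
begin

definition rho3_eq :: "real \<Rightarrow> real \<Rightarrow> real \<Rightarrow> real" where
  "rho3_eq M1 M2 r = 1 - (M2 - 1 / M2) * ((2 * r - r ^ 2) / (1 - r) ^ 2)
      - (M1 - 1 / M1) * ((3 - 2 * r) * r ^ 2 / (1 - r) ^ 2) - 2 * r"

definition rho3 :: "real \<Rightarrow> real \<Rightarrow> real" where
  "rho3 M1 M2 = (THE r. 0 < r \<and> r < 1 \<and> rho3_eq M1 M2 r = 0)"

definition sigma3 :: "real \<Rightarrow> real \<Rightarrow> real" where
  "sigma3 M1 M2 = (let p = rho3 M1 M2 in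
      p - p ^ 2 - (M2 - 1 / M2) * (p ^ 2 / (1 - p)) - (M1 - 1 / M1) * (p ^ 3 / (1 - p)))"

end

theory Submission
  imports Defs
begin


lemma phi_le_M:
  fixes f phi :: "complex \<Rightarrow> complex" and M :: real
  assumes holf: "f holomorphic_on ball 0 1" and f0: "f 0 = 0"
    and fM: "\<And>z. z \<in> ball 0 1 \<Longrightarrow> cmod (f z) \<le> M"
    and fz: "\<And>z. norm z < 1 \<Longrightarrow> f z = z * phi z" and d0: "deriv f 0 = phi 0"
    and z: "norm z < 1"
  shows "cmod (phi z) \<le> M"
proof (rule dense_ge)
  fix M' assume MM': "M < M'"
  have M0: "0 \<le> M" using fM[of 0] f0 by simp
  hence M'0: "M' > 0" using MM' by linarith
  define g where "g w = f w / complex_of_real M'" for w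
  have holg: "g holomorphic_on ball 0 1" unfolding g_def using holf by (intro holomorphic_intros) auto
  have g0: "g 0 = 0" by (simp add: g_def f0)
  have gno: "norm (g w) < 1" if "norm w < 1" for w
  proof -
    have "cmod (f w) \<le> M" using fM that by simp
    thus ?thesis using MM' M'0 by (simp add: g_def norm_divide divide_less_eq)
  qed
  note S = Schwarz_Lemma[OF holg g0 gno z]
  show "cmod (phi z) \<le> M'"
  proof (cases "z = 0")
    case True
    have "f field_differentiable at 0"
      using holf by (meson centre_in_ball holomorphic_on_imp_differentiable_at open_ball zero_less_one)
    hence "deriv g 0 = deriv f 0 / complex_of_real M'" unfolding g_def
      by (rule deriv_cdivide_right)
    with S(2) have "cmod (phi 0) / M' \<le> 1" using M'0 by (simp add: d0 norm_divide)
    thus ?thesis using True M'0 by (simp add: divide_le_eq)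
  next
    case False
    have "cmod (f z) / M' \<le> cmod z" using S(1) M'0 by (simp add: g_def norm_divide)
    hence "cmod z * cmod (phi z) \<le> cmod z * M'" using M'0 fz[OF z] by (simp add: norm_mult divide_le_eq mult.commute)
    thus ?thesis using False by simp
  qed
qed

lemma pick1:
  fixes psi :: "complex \<Rightarrow> complex" and a :: real
  assumes holp: "psi holomorphic_on ball 0 1"
    and lt1: "\<And>z. norm z < 1 \<Longrightarrow> norm (psi z) < 1"
    and p0: "psi 0 = complex_of_real a" and a0: "0 \<le> a" and a1: "a < 1"
    and z: "norm z < 1"
  shows "cmod (psi z - a) * (1 - a * cmod z) \<le> (1 - a^2) * cmod z"
proof -
  define g where "g = Moebius_function 0 (complex_of_real a) \<circ> psi"
  have na: "norm (complex_of_real a) < 1" using a0 a1 by simp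
  have holg: "g holomorphic_on ball 0 1" unfolding g_def
    by (rule holomorphic_on_compose_gen[OF holp Moebius_function_holomorphic[OF na]]) (use lt1 in auto)
  have g0: "g 0 = 0" by (simp add: g_def p0 Moebius_function_eq_zero)
  have gno: "norm (g w) < 1" if "norm w < 1" for w
    unfolding g_def o_def using Moebius_function_norm_lt_1[OF na lt1[OF that]] .
  have S: "cmod (g z) \<le> cmod z" using Schwarz_Lemma(1)[OF holg g0 gno z] .
  have nz: "1 - complex_of_real a * psi z \<noteq> 0"
  proof
    assume "1 - complex_of_real a * psi z = 0"
    hence "norm (complex_of_real a * psi z) = 1" by (metis eq_iff_diff_eq_0 norm_one)
    moreover have "norm (complex_of_real a * psi z) < 1"
    proof -
      have "cmod (of_real a * psi z) = a * cmod (psi z)" using a0 by (simp add: norm_mult)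
      also have "\<dots> \<le> cmod (psi z)" using a0 a1 by (simp add: mult_left_le_one_le)
      also have "\<dots> < 1" by (rule lt1[OF z])
      finally show ?thesis .
    qed
    ultimately show False by simp
  qed
  have gz: "g z = (psi z - a) / (1 - a * psi z)"
    by (simp add: g_def Moebius_function_simple)
  have "psi z - a = g z * (1 - a * psi z)" using nz by (simp add: gz)
  hence e1: "cmod (psi z - a) = cmod (g z) * cmod (1 - a * psi z)" by (simp add: norm_mult)
  have "1 - a * psi z = complex_of_real (1 - a^2) - a * (psi z - a)" by (simp add: algebra_simps power2_eq_square)
  hence "cmod (1 - a * psi z) = cmod (complex_of_real (1 - a^2) - a * (psi z - a))" by (rule arg_cong)
  also have "\<dots> \<le> cmod (complex_of_real (1 - a^2)) + cmod (a * (psi z - a))"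
    by (rule norm_triangle_ineq4)
  also have "\<dots> = (1 - a^2) + a * cmod (psi z - a)"
    using a0 a1 power_le_one[of a 2] by (simp only: norm_mult norm_of_real) simp
  finally have e2: "cmod (1 - a * psi z) \<le> (1 - a^2) + a * cmod (psi z - a)" .
  have "cmod (psi z - a) \<le> cmod z * cmod (1 - a * psi z)"
    using e1 S by (simp add: mult_right_mono)
  also have "\<dots> \<le> cmod z * ((1 - a^2) + a * cmod (psi z - a))"
    using e2 by (simp add: mult_left_mono)
  finally have "cmod (psi z - a) \<le> cmod z * ((1 - a^2) + a * cmod (psi z - a))" .
  thus ?thesis by (simp add: algebra_simps)
qed

lemma mob_has_deriv:
  fixes c w :: complex
  assumes "1 - cnj c * w \<noteq> 0"
  shows "(Moebius_function 0 c has_field_derivative (1 - c * cnj c) / (1 - cnj c * w)^2) (at w)"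
proof -
  have e: "Moebius_function 0 c = (\<lambda>w. (w - c) / (1 - cnj c * w))"
    by (rule ext) (simp add: Moebius_function_simple)
  show ?thesis unfolding e using assms
    by (auto intro!: derivative_eq_intros simp: field_simps power2_eq_square)
qed

lemma pick2:
  fixes psi :: "complex \<Rightarrow> complex"
  assumes holp: "psi holomorphic_on ball 0 1"
    and lt1: "\<And>z. norm z < 1 \<Longrightarrow> norm (psi z) < 1"
    and z0: "norm z0 < 1"
  shows "cmod (deriv psi z0) * (1 - (cmod z0)^2) \<le> 1 - (cmod (psi z0))^2"
proof -
  define b where "b = psi z0"
  have nb: "norm b < 1" using lt1[OF z0] by (simp add: b_def)
  have nz0: "norm (-z0) < 1" using z0 by simp
  define m1 where "m1 = Moebius_function 0 (-z0)"
  define m2 where "m2 = Moebius_function 0 b"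
  define g where "g = m2 \<circ> (psi \<circ> m1)"
  have m1b: "m1 ` ball 0 1 \<subseteq> ball 0 1" unfolding m1_def using Moebius_function_norm_lt_1[OF nz0] by auto
  have hol1: "(psi \<circ> m1) holomorphic_on ball 0 1"
    by (rule holomorphic_on_compose_gen[OF _ holp m1b]) (simp add: m1_def Moebius_function_holomorphic[OF nz0])
  have holg: "g holomorphic_on ball 0 1" unfolding g_def
    by (rule holomorphic_on_compose_gen[OF hol1]) (use lt1 m1b in \<open>auto simp: m2_def intro!: Moebius_function_holomorphic[OF nb]\<close>)
  have m10: "m1 0 = z0" by (simp add: m1_def Moebius_function_of_zero)
  have g0: "g 0 = 0" by (simp add: g_def m10 m2_def b_def Moebius_function_eq_zero)
  have gno: "norm (g w) < 1" if "norm w < 1" for w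
  proof -
    have "norm (m1 w) < 1" using m1b that by (auto simp: image_subset_iff)
    hence "norm (psi (m1 w)) < 1" by (rule lt1)
    thus ?thesis unfolding g_def m2_def o_def by (rule Moebius_function_norm_lt_1[OF nb])
  qed
  have S: "norm (deriv g 0) \<le> 1" using Schwarz_Lemma(2)[OF holg g0 gno, of 0] by simp
  have dm1: "(m1 has_field_derivative (1 - z0 * cnj z0)) (at 0)"
    unfolding m1_def using mob_has_deriv[of "-z0" 0] by simp
  have dpsi: "(psi has_field_derivative deriv psi z0) (at (m1 0))"
    unfolding m10 by (rule holomorphic_derivI[OF holp]) (use z0 in auto)
  have nbb: "1 - cnj b * b \<noteq> 0"
  proof
    assume "1 - cnj b * b = 0"
    hence "cnj b * b = 1" by simp
    hence "norm (cnj b * b) = 1" by simp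
    moreover have "cmod b * cmod b \<le> cmod b" using nb by (simp add: mult_left_le_one_le less_imp_le)
    ultimately show False using nb by (simp add: norm_mult)
  qed
  have dm2: "(m2 has_field_derivative (1 - b * cnj b) / (1 - cnj b * b)^2) (at ((psi \<circ> m1) 0))"
    unfolding m2_def using mob_has_deriv[OF nbb] by (simp add: m10 b_def)
  have dg: "(g has_field_derivative ((1 - b * cnj b) / (1 - cnj b * b)^2) * (deriv psi z0 * (1 - z0 * cnj z0))) (at 0)"
    unfolding g_def by (rule DERIV_chain[OF dm2 DERIV_chain[OF dpsi dm1]])
  have "deriv g 0 = ((1 - b * cnj b) / (1 - cnj b * b)^2) * (deriv psi z0 * (1 - z0 * cnj z0))"
    by (rule DERIV_imp_deriv[OF dg])
  also have "\<dots> = deriv psi z0 * of_real (1 - (cmod z0)^2) / of_real (1 - (cmod b)^2)"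
  proof -
    have e1: "b * cnj b = of_real ((cmod b)^2)" "cnj b * b = of_real ((cmod b)^2)" "z0 * cnj z0 = of_real ((cmod z0)^2)"
      using complex_norm_square[of b] complex_norm_square[of z0] by (simp_all only: mult.commute[of "cnj b"])
    have ne: "1 - complex_of_real ((cmod b)^2) \<noteq> 0" using nbb e1(2) by simp
    have gen: "\<And>\<beta> \<zeta> d::complex. 1 - \<beta> \<noteq> 0 \<Longrightarrow> (1-\<beta>)/(1-\<beta>)^2*(d*(1-\<zeta>)) = d*(1-\<zeta>)/(1-\<beta>)"
      by (simp add: power2_eq_square)
    show ?thesis unfolding e1 of_real_diff of_real_1 by (rule gen[OF ne])
  qed
  finally have dg2: "deriv g 0 = deriv psi z0 * of_real (1 - (cmod z0)^2) / of_real (1 - (cmod b)^2)" .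
  have p1: "0 < 1 - (cmod b)^2" using nb by (simp add: abs_square_less_1)
  have p2: "0 < 1 - (cmod z0)^2" using z0 by (simp add: abs_square_less_1)
  have n1: "cmod (complex_of_real (1 - (cmod z0)^2)) = 1 - (cmod z0)^2" using p2 by (simp only: norm_of_real abs_of_pos)
  have n2: "cmod (complex_of_real (1 - (cmod b)^2)) = 1 - (cmod b)^2" using p1 by (simp only: norm_of_real abs_of_pos)
  have "cmod (deriv psi z0) * (1 - (cmod z0)^2) / (1 - (cmod b)^2) \<le> 1"
    using S unfolding dg2 norm_divide norm_mult n1 n2 .
  moreover note p1
  ultimately show ?thesis by (simp add: b_def divide_le_eq)
qed

lemma R1:
  fixes M r p :: real
  assumes M: "1 \<le> M" and r0: "0 \<le> r" and r1: "r < 1" and p0: "0 \<le> p"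
    and h: "p * (1 - r / M) \<le> (M - 1/M) * r"
  shows "p \<le> (M - 1/M) * r / (1 - r)"
proof -
  have "r / M \<le> r" using M r0 by (simp add: divide_le_eq mult_le_cancel_left1)
  hence "p * (1 - r) \<le> p * (1 - r / M)" using p0 by (simp add: mult_left_mono)
  also note h
  finally show ?thesis using r1 by (simp add: le_divide_eq)
qed

lemma R2:
  fixes M r p s q :: real
  assumes M: "1 \<le> M" and r0: "0 \<le> r" and r1: "r < 1" and Mr: "M * r \<le> 1"
    and p0: "0 \<le> p" and h: "p * (1 - r / M) \<le> (M - 1/M) * r"
    and s: "1 - p \<le> s" and q0: "0 \<le> q" and hq: "q * (1 - r^2) \<le> M - s^2 / M"
  shows "q \<le> (M - 1/M) / (1 - r)^2"
proof -
  define t where "t = 1 - r / M"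
  have Mp: "M > 0" using M by simp
  have rM: "r / M \<le> r" using M r0 by (simp add: divide_le_eq) (smt (verit) mult_le_cancel_left1)
  have t1: "1 - r \<le> t" using rM by (simp add: t_def)
  have t0: "0 < t" using t1 r1 by simp
  have tM: "M * t = M - r" using Mp by (simp add: t_def algebra_simps)
  have "p \<le> (M - 1/M) * r / t" using h t0 by (simp add: t_def le_divide_eq)
  hence "1 - (M - 1/M) * r / t \<le> s" using s by simp
  moreover have "1 - (M - 1/M) * r / t = (1 - M * r) / t"
    using t0 Mp by (simp add: field_simps t_def)
  ultimately have s1: "(1 - M * r) / t \<le> s" by simp
  have s2: "0 \<le> (1 - M * r) / t" using Mr t0 by simp
  have "((1 - M * r) / t)^2 \<le> s^2" using s1 s2 by (simp add: power_mono)
  hence "M - s^2 / M \<le> M - ((1 - M * r) / t)^2 / M" using Mp by (simp add: divide_right_mono)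
  also have "\<dots> = ((M*t)^2 - (1 - M*r)^2) / (M * t^2)"
    using t0 Mp by (simp add: field_simps power2_eq_square)
  also have "(M*t)^2 - (1 - M*r)^2 = (M^2 - 1) * (1 - r^2)"
    unfolding tM by (simp add: power2_eq_square algebra_simps)
  also have "(M^2 - 1) * (1 - r^2) / (M * t^2) = (M - 1/M) / t^2 * (1 - r^2)"
    using t0 Mp by (simp add: field_simps power2_eq_square)
  finally have "q * (1 - r^2) \<le> (M - 1/M) / t^2 * (1 - r^2)" using hq by linarith
  moreover have "0 < 1 - r^2" using r0 r1 by (simp add: abs_square_less_1)
  ultimately have "q \<le> (M - 1/M) / t^2" by (metis mult_le_cancel_right_pos)
  also have "\<dots> \<le> (M - 1/M) / (1 - r)^2"
  proof (rule divide_left_mono)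
    show "0 \<le> M - 1/M" using M by (simp add: field_simps) (smt (verit) mult_le_cancel_left1)
    show "(1 - r)^2 \<le> t^2" using t1 r1 by (simp add: power_mono)
    show "0 < t^2 * (1 - r)^2" using t0 r1 by simp
  qed
  finally show ?thesis .
qed

lemma key_bounds:
  fixes f :: "complex \<Rightarrow> complex" and M :: real
  assumes holf: "f holomorphic_on ball 0 1" and f0: "f 0 = 0" and d0: "deriv f 0 = 1"
    and fM: "\<And>z. z \<in> ball 0 1 \<Longrightarrow> cmod (f z) \<le> M"
  shows "1 \<le> M"
    and "\<And>z. norm z < 1 \<Longrightarrow> cmod (f z - z) \<le> (M - 1/M) * (cmod z)^2 / (1 - cmod z)"
    and "\<And>z. norm z < 1 \<Longrightarrow> cmod (deriv f z) \<le> 1 + (M - 1/M) * cmod z / (1 - cmod z) + cmod z * M / (1 - (cmod z)^2)"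
    and "\<And>z. norm z < 1 \<Longrightarrow> M * cmod z \<le> 1 \<Longrightarrow> cmod (deriv f z - 1) \<le> (M - 1/M) * cmod z / (1 - cmod z) + cmod z * ((M - 1/M) / (1 - cmod z)^2)"
proof -
  obtain phi where holp: "phi holomorphic_on ball 0 1" and fz: "\<And>z. norm z < 1 \<Longrightarrow> f z = z * phi z"
    and dp: "deriv f 0 = phi 0"
    by (rule Schwarz3[OF holf f0]) auto
  have p0: "phi 0 = 1" using dp d0 by simp
  have phiM: "cmod (phi z) \<le> M" if "norm z < 1" for z
    by (rule phi_le_M[OF holf f0 fM fz dp that])
  show M1: "1 \<le> M" using phiM[of 0] p0 by simp
  have Mp: "0 < M" using M1 by simp
  have A0: "0 \<le> M - 1/M" using M1 by (simp add: field_simps) (smt (verit) mult_le_cancel_left1)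
  have df: "deriv f z = phi z + z * deriv phi z" if z: "norm z < 1" for z
  proof -
    have dphi: "(phi has_field_derivative deriv phi z) (at z)"
      by (rule holomorphic_derivI[OF holp]) (use z in auto)
    have "((\<lambda>w. w * phi w) has_field_derivative (phi z + z * deriv phi z)) (at z)"
      using DERIV_mult[OF DERIV_ident dphi] by (simp add: mult.commute)
    hence "(f has_field_derivative (phi z + z * deriv phi z)) (at z)"
      by (rule has_field_derivative_transform_within_open[where S="ball 0 1"]) (use z fz in auto)
    thus ?thesis by (rule DERIV_imp_deriv)
  qed
  have main: "cmod (phi z - 1) * (1 - cmod z / M) \<le> (M - 1/M) * cmod z
      \<and> cmod (deriv phi z) * (1 - (cmod z)^2) \<le> M - (cmod (phi z))^2 / M" if z: "norm z < 1" for z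
  proof (cases "\<exists>z0. norm z0 < 1 \<and> cmod (phi z0) = M")
    case True
    then obtain z0 where z0: "norm z0 < 1" "cmod (phi z0) = M" by blast
    have "phi constant_on ball 0 1"
      by (rule maximum_modulus_principle[OF holp open_ball connected_ball open_ball subset_refl, of z0])
         (use z0 phiM in auto)
    then obtain c where c: "\<And>w. w \<in> ball 0 1 \<Longrightarrow> phi w = c" by (auto simp: constant_on_def)
    have c1: "\<And>w. w \<in> ball 0 1 \<Longrightarrow> phi w = 1" using c[of 0] c p0 by simp
    have MM: "M = 1" using z0 c1[of z0] by simp
    have "((\<lambda>w. 1) has_field_derivative 0) (at z)" by simp
    hence "(phi has_field_derivative 0) (at z)"
      by (rule has_field_derivative_transform_within_open[where S="ball 0 1"]) (use z c1 in auto)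
    hence "deriv phi z = 0" by (rule DERIV_imp_deriv)
    then show ?thesis using c1[of z] z MM by simp
  next
    case False
    hence lt: "cmod (phi w) < M" if "norm w < 1" for w using phiM[OF that] that by force
    define psi where "psi w = phi w / complex_of_real M" for w
    have holq: "psi holomorphic_on ball 0 1" unfolding psi_def using holp by (intro holomorphic_intros) auto
    have lt1: "norm (psi w) < 1" if "norm w < 1" for w
      using lt[OF that] Mp by (simp add: psi_def norm_divide divide_less_eq)
    have a1: "1 / M < 1" using lt1[of 0] p0 Mp by (simp add: psi_def norm_divide)
    have q0: "psi 0 = complex_of_real (1/M)" by (simp add: psi_def p0)
    have aa: "0 \<le> 1/M" using Mp by simp
    have P1: "cmod (psi z - of_real (1/M)) * (1 - 1/M * cmod z) \<le> (1 - (1/M)^2) * cmod z"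
      using pick1[OF holq lt1 q0 aa a1 z] by simp
    have e1: "psi z - of_real (1/M) = (phi z - 1) / of_real M" using Mp by (simp add: psi_def field_simps)
    have X: "cmod (phi z - 1) * (1 - cmod z / M) / M \<le> (1 - (1/M)^2) * cmod z"
      using P1 Mp unfolding e1 by (simp add: norm_divide)
    hence "cmod (phi z - 1) * (1 - cmod z / M) \<le> M * ((1 - (1/M)^2) * cmod z)"
      using Mp by (simp add: divide_le_eq mult.commute)
    also have "M * ((1 - (1/M)^2) * cmod z) = (M - 1/M) * cmod z"
      using Mp by (simp add: field_simps power2_eq_square)
    finally have m1: "cmod (phi z - 1) * (1 - cmod z / M) \<le> (M - 1/M) * cmod z" .
    have P2: "cmod (deriv psi z) * (1 - (cmod z)^2) \<le> 1 - (cmod (psi z))^2"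
      by (rule pick2[OF holq lt1 z])
    have "phi field_differentiable at z"
      using holp z by (meson holomorphic_on_imp_differentiable_at mem_ball_0 open_ball)
    hence e2: "deriv psi z = deriv phi z / of_real M" unfolding psi_def[abs_def] by (rule deriv_cdivide_right)
    have "cmod (deriv phi z) * (1 - (cmod z)^2) / M \<le> 1 - (cmod (phi z) / M)^2"
      using P2 Mp unfolding e2 by (simp add: norm_divide psi_def)
    hence "cmod (deriv phi z) * (1 - (cmod z)^2) \<le> M * (1 - (cmod (phi z) / M)^2)"
      using Mp by (simp add: divide_le_eq mult.commute)
    also have "M * (1 - (cmod (phi z) / M)^2) = M - (cmod (phi z))^2 / M"
      using Mp by (simp add: field_simps power2_eq_square)
    finally have m2: "cmod (deriv phi z) * (1 - (cmod z)^2) \<le> M - (cmod (phi z))^2 / M" .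
    show ?thesis using m1 m2 by simp
  qed
  have pb: "cmod (phi z - 1) \<le> (M - 1/M) * cmod z / (1 - cmod z)" if z: "norm z < 1" for z
    by (rule R1[OF M1 norm_ge_zero z norm_ge_zero]) (use main[OF z] in blast)
  show "cmod (f z - z) \<le> (M - 1/M) * (cmod z)^2 / (1 - cmod z)" if z: "norm z < 1" for z
  proof -
    have "f z - z = z * (phi z - 1)" using fz[OF z] by (simp add: algebra_simps)
    hence "cmod (f z - z) = cmod z * cmod (phi z - 1)" by (simp add: norm_mult)
    also have "\<dots> \<le> cmod z * ((M - 1/M) * cmod z / (1 - cmod z))"
      using pb[OF z] by (rule mult_left_mono) simp
    also have "\<dots> = (M - 1/M) * (cmod z)^2 / (1 - cmod z)" by (simp add: power2_eq_square)
    finally show ?thesis .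
  qed
  show "cmod (deriv f z) \<le> 1 + (M - 1/M) * cmod z / (1 - cmod z) + cmod z * M / (1 - (cmod z)^2)" if z: "norm z < 1" for z
  proof -
    have r2: "0 < 1 - (cmod z)^2" using z by (simp add: abs_square_less_1)
    have "cmod (deriv phi z) * (1 - (cmod z)^2) \<le> M" using main[OF z] Mp
      by (smt (verit) divide_nonneg_pos zero_le_power2)
    hence q: "cmod (deriv phi z) \<le> M / (1 - (cmod z)^2)" using r2 by (simp add: le_divide_eq)
    have "cmod (phi z) \<le> 1 + cmod (phi z - 1)" using norm_triangle_ineq2[of "phi z" 1] by simp
    hence s: "cmod (phi z) \<le> 1 + (M - 1/M) * cmod z / (1 - cmod z)" using pb[OF z] by linarith
    have "cmod (deriv f z) \<le> cmod (phi z) + cmod z * cmod (deriv phi z)"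
      unfolding df[OF z] using norm_triangle_ineq[of "phi z" "z * deriv phi z"] by (simp add: norm_mult)
    also have "\<dots> \<le> (1 + (M - 1/M) * cmod z / (1 - cmod z)) + cmod z * (M / (1 - (cmod z)^2))"
      using s q by (intro add_mono mult_left_mono) auto
    finally show ?thesis by simp
  qed
  show "cmod (deriv f z - 1) \<le> (M - 1/M) * cmod z / (1 - cmod z) + cmod z * ((M - 1/M) / (1 - cmod z)^2)"
    if z: "norm z < 1" and Mz: "M * cmod z \<le> 1" for z
  proof -
    have "1 \<le> cmod (phi z) + cmod (phi z - 1)" using norm_triangle_ineq2[of 1 "phi z"]
      by (simp add: norm_minus_commute)
    hence s: "1 - cmod (phi z - 1) \<le> cmod (phi z)" by simp
    have q: "cmod (deriv phi z) \<le> (M - 1/M) / (1 - cmod z)^2"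
      by (rule R2[OF M1 norm_ge_zero z Mz norm_ge_zero _ s norm_ge_zero]) (use main[OF z] in auto)
    have "cmod (deriv f z - 1) \<le> cmod (phi z - 1) + cmod z * cmod (deriv phi z)"
      unfolding df[OF z] using norm_triangle_ineq[of "phi z - 1" "z * deriv phi z"] by (simp add: norm_mult algebra_simps)
    also have "\<dots> \<le> (M - 1/M) * cmod z / (1 - cmod z) + cmod z * ((M - 1/M) / (1 - cmod z)^2)"
      using pb[OF z] q by (intro add_mono mult_left_mono) auto
    finally show ?thesis .
  qed
qed



lemma mono_aux:
  fixes x y :: real
  assumes x0: "0 \<le> x" and xy: "x \<le> y" and y1: "y < 1"
  shows "(2 * x - x^2) / (1 - x)^2 \<le> (2 * y - y^2) / (1 - y)^2"
    and "(3 - 2 * x) * x^2 / (1 - x)^2 \<le> (3 - 2 * y) * y^2 / (1 - y)^2"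
proof -
  have p: "0 < (1 - y)^2" using y1 by simp
  have q: "(1 - y)^2 \<le> (1 - x)^2" using x0 xy y1 by (intro power_mono) auto
  have e: "(2 * t - t^2) / (1 - t)^2 = 1 / (1 - t)^2 - 1" if "t < 1" for t :: real
  proof -
    have nz: "(1 - t)^2 \<noteq> 0" using that by simp
    have "1 / (1 - t)^2 - 1 = (1 - (1 - t)^2) / (1 - t)^2" using nz by (simp add: diff_divide_distrib)
    also have "1 - (1 - t)^2 = 2 * t - t^2" by (simp add: power2_eq_square algebra_simps)
    finally show ?thesis by simp
  qed
  have "1 / (1 - x)^2 \<le> 1 / (1 - y)^2" using frac_le[of 1 1 "(1-y)^2" "(1-x)^2"] p q by simp
  thus "(2 * x - x^2) / (1 - x)^2 \<le> (2 * y - y^2) / (1 - y)^2"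
    using e[of x] e[of y] xy y1 by simp
  have n: "(3 - 2 * x) * x^2 \<le> (3 - 2 * y) * y^2"
  proof -
    have "(3 - 2 * y) * y^2 - (3 - 2 * x) * x^2 = (y - x) * (3 * (x + y) - 2 * (x^2 + x*y + y^2))"
      by (simp add: algebra_simps power2_eq_square)
    moreover have "2 * (x^2 + x*y + y^2) \<le> 3 * (x + y)"
    proof -
      have "x^2 \<le> x" using x0 xy y1 by (simp add: power2_eq_square mult_left_le_one_le)
      moreover have "y^2 \<le> y" using x0 xy y1 by (simp add: power2_eq_square mult_left_le_one_le)
      moreover have "x*y \<le> x" using x0 xy y1 by (simp add: mult_left_le)
      moreover have "x*y \<le> y" using x0 xy y1 by (simp add: mult_left_le_one_le)
      ultimately show ?thesis by (simp only: distrib_left)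
    qed
    ultimately have "0 \<le> (y - x) * (3 * (x + y) - 2 * (x^2 + x*y + y^2))"
      using xy by (intro mult_nonneg_nonneg) auto
    with \<open>(3 - 2 * y) * y^2 - (3 - 2 * x) * x^2 = _\<close> show ?thesis by linarith
  qed
  have n0: "0 \<le> (3 - 2 * y) * y^2" using y1 by simp
  show "(3 - 2 * x) * x^2 / (1 - x)^2 \<le> (3 - 2 * y) * y^2 / (1 - y)^2"
    by (rule frac_le[OF n0 n p q])
qed

lemma rho3_eq_strict:
  fixes M1 M2 x y :: real
  assumes A: "0 \<le> M2 - 1/M2" and B: "0 \<le> M1 - 1/M1"
    and x0: "0 \<le> x" and xy: "x < y" and y1: "y < 1"
  shows "rho3_eq M1 M2 y < rho3_eq M1 M2 x"
proof -
  note m = mono_aux[OF x0 less_imp_le[OF xy] y1]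
  have "(M2 - 1/M2) * ((2 * x - x^2) / (1 - x)^2) \<le> (M2 - 1/M2) * ((2 * y - y^2) / (1 - y)^2)"
    using m(1) A by (rule mult_left_mono)
  moreover have "(M1 - 1/M1) * ((3 - 2 * x) * x^2 / (1 - x)^2) \<le> (M1 - 1/M1) * ((3 - 2 * y) * y^2 / (1 - y)^2)"
    using m(2) B by (rule mult_left_mono)
  ultimately show ?thesis using xy unfolding rho3_eq_def by linarith
qed

lemma rho3_facts:
  fixes M1 M2 :: real
  assumes A: "0 \<le> M2 - 1/M2" and B: "0 \<le> M1 - 1/M1"
  shows "0 < rho3 M1 M2" "rho3 M1 M2 \<le> 1/2" "rho3_eq M1 M2 (rho3 M1 M2) = 0"
    "\<And>r. 0 \<le> r \<Longrightarrow> r < rho3 M1 M2 \<Longrightarrow> 0 < rho3_eq M1 M2 r"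
proof -
  have cont: "continuous_on {0..1/2} (rho3_eq M1 M2)"
    unfolding rho3_eq_def by (intro continuous_intros) auto
  have f0: "rho3_eq M1 M2 0 = 1" by (simp add: rho3_eq_def)
  have fh: "rho3_eq M1 M2 (1/2) \<le> 0"
  proof -
    have e1: "(2 * (1/2) - (1/2)^2) / (1 - 1/2)^2 = (3::real)" by (simp add: power2_eq_square)
    have e2: "(3 - 2 * (1/2)) * (1/2)^2 / (1 - 1/2)^2 = (2::real)" by (simp add: power2_eq_square)
    show ?thesis unfolding rho3_eq_def e1 e2 using A B by simp
  qed
  obtain x where x: "0 \<le> x" "x \<le> 1/2" "rho3_eq M1 M2 x = 0"
    using IVT2'[of "rho3_eq M1 M2" "1/2" 0 0, OF fh] f0 cont by auto
  have xpos: "0 < x" using x f0 by (cases "x = 0") auto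
  have uniq: "y = x" if "0 < y" "y < 1" "rho3_eq M1 M2 y = 0" for y
  proof (rule ccontr)
    assume "y \<noteq> x"
    then consider "y < x" | "x < y" by linarith
    thus False
    proof cases
      case 1 thus False using rho3_eq_strict[OF A B _ 1] that x by simp
    next
      case 2 thus False using rho3_eq_strict[OF A B _ 2] that x by simp
    qed
  qed
  have rx: "rho3 M1 M2 = x" unfolding rho3_def
  proof (rule the_equality)
    show "0 < x \<and> x < 1 \<and> rho3_eq M1 M2 x = 0" using x xpos by simp
    show "\<And>y. 0 < y \<and> y < 1 \<and> rho3_eq M1 M2 y = 0 \<Longrightarrow> y = x" using uniq by blast
  qed
  show "0 < rho3 M1 M2" "rho3 M1 M2 \<le> 1/2" "rho3_eq M1 M2 (rho3 M1 M2) = 0"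
    using rx x xpos by auto
  show "0 < rho3_eq M1 M2 r" if "0 \<le> r" "r < rho3 M1 M2" for r
    using rho3_eq_strict[OF A B that(1), of x] that rx x by simp
qed


lemma ineqU:
  fixes M1 M2 r :: real
  assumes A: "0 \<le> M2 - 1/M2" and B: "0 \<le> M1 - 1/M1" and M1: "1 \<le> M1"
    and r0: "0 \<le> r" and rh: "r \<le> 1/2" and pos: "0 < rho3_eq M1 M2 r"
  shows "0 < 1 - ((M2 - 1/M2) * r / (1 - r) + r * ((M2 - 1/M2) / (1 - r)^2))
      - r^2 * (1 + (M1 - 1/M1) * r / (1 - r) + r * M1 / (1 - r^2))
      - 2 * r * (r + (M1 - 1/M1) * r^2 / (1 - r))"
proof -
  define a where "a = M2 - 1/M2"
  define b where "b = M1 - 1/M1"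
  have a0: "0 \<le> a" and b0: "0 \<le> b" using A B by (simp_all add: a_def b_def)
  have Mb: "M1 \<le> b + 1" unfolding b_def using M1 by (simp add: field_simps)
  have r1: "r < 1" using rh by simp
  have d1: "0 < 1 - r" using r1 by simp
  have d2: "0 < (1 - r)^2" using r1 by simp
  have d3: "3/4 \<le> 1 - r^2" using r0 rh power_mono[OF rh r0, of 2] by (simp add: power2_eq_square)
  have d4: "(1 - r)^2 \<le> 1 - r^2" using r0 r1 by (simp add: power2_eq_square algebra_simps mult_left_le)
  have d5: "(1 - r)^2 \<le> 1 - r" using r0 r1 by (simp add: power2_eq_square mult_left_le_one_le)
  have eqA: "a * r / (1 - r) + r * (a / (1 - r)^2) = a * ((2 * r - r^2) / (1 - r)^2)"
  proof -
    have "a * r / (1 - r) = a * (r * (1 - r)) / (1 - r)^2" using d1 by (simp add: power2_eq_square)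
    hence "a * r / (1 - r) + r * (a / (1 - r)^2) = (a * (r * (1 - r)) + r * a) / (1 - r)^2"
      by (simp add: add_divide_distrib)
    also have "a * (r * (1 - r)) + r * a = a * (2 * r - r^2)" by (simp add: algebra_simps power2_eq_square)
    finally show ?thesis by simp
  qed
  have P: "1 - a * ((2 * r - r^2) / (1 - r)^2) - b * ((3 - 2 * r) * r^2 / (1 - r)^2) - 2 * r > 0"
    using pos by (simp add: rho3_eq_def a_def b_def)
  have t1: "r * M1 / (1 - r^2) \<le> r * (b + 1) / (1 - r^2)"
    using Mb r0 d3 by (intro divide_right_mono mult_left_mono) auto
  have t2: "r^3 / (1 - r^2) \<le> r^3 / (3/4)"
    by (rule frac_le) (use r0 d3 in auto)
  have nonB: "3 * r^2 + r^3 / (1 - r^2) \<le> 2 * r"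
  proof -
    have "r^2 \<le> 1/4" using power_mono[OF rh r0, of 2] by (simp add: power2_eq_square)
    hence "r * (3 * r + 4/3 * r^2) \<le> r * 2" using r0 rh by (intro mult_left_mono) auto
    hence "3 * r^2 + 4/3 * r^3 \<le> 2 * r" by (simp add: power2_eq_square power3_eq_cube algebra_simps)
    moreover have e: "r^3 / (3/4) = 4/3 * r^3" by simp
    have X: "r^3 / (1 - r^2) \<le> 4/3 * r^3" using t2 unfolding e .
    ultimately show ?thesis using X by linarith
  qed
  have w1: "r^3 / (1 - r) \<le> r^3 / (1 - r)^2" by (rule frac_le) (use r0 d2 d5 in auto)
  have w2: "r^3 / (1 - r^2) \<le> r^3 / (1 - r)^2" by (rule frac_le) (use r0 d2 d4 in auto)
  have w3: "4 * r^3 \<le> (3 - 2 * r) * r^2"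
  proof -
    have "r^2 * (4 * r) \<le> r^2 * (3 - 2 * r)" using rh by (intro mult_left_mono) auto
    thus ?thesis by (simp add: power2_eq_square power3_eq_cube algebra_simps)
  qed
  have w: "3 * (r^3 / (1 - r)) + r^3 / (1 - r^2) \<le> (3 - 2 * r) * r^2 / (1 - r)^2"
  proof -
    have "3 * (r^3 / (1 - r)) + r^3 / (1 - r^2) \<le> 4 * r^3 / (1 - r)^2" using w1 w2 by simp
    also have "\<dots> \<le> (3 - 2 * r) * r^2 / (1 - r)^2" using w3 d2 by (simp add: divide_right_mono)
    finally show ?thesis .
  qed
  have LHS: "r^2 * (1 + b * r / (1 - r) + r * M1 / (1 - r^2)) + 2 * r * (r + b * r^2 / (1 - r))
      \<le> (3 * r^2 + r^3 / (1 - r^2)) + b * (3 * (r^3 / (1 - r)) + r^3 / (1 - r^2))"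
  proof -
    have "r^2 * (1 + b * r / (1 - r) + r * M1 / (1 - r^2)) \<le> r^2 * (1 + b * r / (1 - r) + r * (b + 1) / (1 - r^2))"
      using t1 by (intro mult_left_mono) auto
    also have "\<dots> + 2 * r * (r + b * r^2 / (1 - r)) = (3 * r^2 + r^3 / (1 - r^2)) + b * (3 * (r^3 / (1 - r)) + r^3 / (1 - r^2))"
      by (simp add: field_simps power2_eq_square power3_eq_cube add_divide_distrib)
    finally show ?thesis by simp
  qed
  have "b * (3 * (r^3 / (1 - r)) + r^3 / (1 - r^2)) \<le> b * ((3 - 2 * r) * r^2 / (1 - r)^2)"
    using w b0 by (rule mult_left_mono)
  with LHS nonB P eqA show ?thesis unfolding a_def[symmetric] b_def[symmetric] by linarith
qed

lemma ineqM2: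
  fixes M1 M2 r :: real
  assumes A: "0 \<le> M2 - 1/M2" and B: "0 \<le> M1 - 1/M1" and M2: "1 \<le> M2"
    and r0: "0 \<le> r" and rh: "r \<le> 1/2" and pos: "0 < rho3_eq M1 M2 r"
  shows "M2 * r \<le> 1"
proof -
  have r1: "r < 1" using rh by simp
  have u: "2 * r \<le> (2 * r - r^2) / (1 - r)^2"
  proof -
    have "2 * r * (1 - r)^2 \<le> 2 * r - r^2"
    proof -
      have "r^2 * (2 * r) \<le> r^2 * 3" using rh by (intro mult_left_mono) auto
      thus ?thesis by (simp add: power2_eq_square algebra_simps)
    qed
    thus ?thesis using r1 by (simp add: le_divide_eq)
  qed
  have v: "0 \<le> (3 - 2 * r) * r^2 / (1 - r)^2" using rh by simp
  have "(M2 - 1/M2) * (2 * r) \<le> (M2 - 1/M2) * ((2 * r - r^2) / (1 - r)^2)" using u A by (rule mult_left_mono)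
  moreover have "0 \<le> (M1 - 1/M1) * ((3 - 2 * r) * r^2 / (1 - r)^2)" using mult_nonneg_nonneg[OF B v] .
  ultimately have "(M2 - 1/M2) * (2 * r) + 2 * r < 1" using pos unfolding rho3_eq_def by linarith
  moreover have "M2 * r \<le> (M2 - 1/M2) * (2 * r) + 2 * r"
  proof -
    have "r / M2 \<le> r" using M2 r0 by (simp add: divide_le_eq mult_le_cancel_left1)
    hence "M2 * r \<le> 2 * (M2 * r) - 2 * (r / M2) + 2 * r" using M2 r0 by simp
    thus ?thesis by (simp add: algebra_simps)
  qed
  ultimately show ?thesis by linarith
qed

lemma ineqC:
  fixes M1 M2 r :: real
  assumes B: "0 \<le> M1 - 1/M1" and r0: "0 \<le> r" and rh: "r \<le> 1/2"
  shows "r - r^2 - (M2 - 1/M2) * (r^2 / (1 - r)) - (M1 - 1/M1) * (r^3 / (1 - r))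
     \<le> r - (M2 - 1/M2) * r^2 / (1 - r) - r^2 * (r + (M1 - 1/M1) * r^2 / (1 - r))"
proof -
  have r1: "r < 1" using rh by simp
  have "r^2 * r \<le> r^2 * 1" using r0 r1 by (intro mult_left_mono) auto
  hence "r^3 \<le> r^2" by (simp add: power2_eq_square power3_eq_cube)
  moreover have "r^4 / (1 - r) \<le> r^3 / (1 - r)"
  proof -
    have "r^4 \<le> r^3" using r0 r1 by (simp add: power_decreasing)
    thus ?thesis using r1 by (simp add: divide_right_mono)
  qed
  hence "(M1 - 1/M1) * (r^4 / (1 - r)) \<le> (M1 - 1/M1) * (r^3 / (1 - r))" using B by (rule mult_left_mono)
  moreover have "r^2 * (r + (M1 - 1/M1) * r^2 / (1 - r)) = r^3 + (M1 - 1/M1) * (r^4 / (1 - r))"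
  proof -
    have e4: "r^4 = r^2 * r^2" by (simp flip: power_add)
    have e3: "r^3 = r^2 * r" by (simp flip: power_Suc2)
    show ?thesis unfolding e4 e3 by (simp add: algebra_simps)
  qed
  moreover have "(M2 - 1/M2) * r^2 / (1 - r) = (M2 - 1/M2) * (r^2 / (1 - r))" by simp
  ultimately show ?thesis by linarith
qed

lemma mono_frac:
  fixes c t r :: real
  assumes t0: "0 \<le> t" and tr: "t \<le> r" and r1: "r < 1" and c0: "0 \<le> c"
  shows "c * t / (1 - t) \<le> c * r / (1 - r)"
    and "c * t^2 / (1 - t) \<le> c * r^2 / (1 - r)"
    and "t * (c / (1 - t)^2) \<le> r * (c / (1 - r)^2)"
    and "t * c / (1 - t^2) \<le> r * c / (1 - r^2)"
proof -
  have a: "0 < 1 - r" "1 - r \<le> 1 - t" using tr r1 by auto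
  have b: "0 < (1 - r)^2" "(1 - r)^2 \<le> (1 - t)^2" using tr r1 t0 by (auto intro!: power_mono)
  have tt: "t^2 \<le> r^2" by (rule power_mono[OF tr t0])
  have rr: "r^2 < 1" using t0 tr r1 by (simp add: abs_square_less_1)
  have c: "0 < 1 - r^2" "1 - r^2 \<le> 1 - t^2" using tt rr by auto
  have r0: "0 \<le> r" using t0 tr by simp
  show "c * t / (1 - t) \<le> c * r / (1 - r)"
    by (rule frac_le) (use a c0 r0 tr in \<open>auto intro: mult_left_mono\<close>)
  show "c * t^2 / (1 - t) \<le> c * r^2 / (1 - r)"
    by (rule frac_le) (use a c0 tt in \<open>auto intro: mult_left_mono\<close>)
  have "t * c / (1 - t)^2 \<le> r * c / (1 - r)^2"
    by (rule frac_le) (use b c0 r0 tr in \<open>auto intro: mult_right_mono\<close>)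
  thus "t * (c / (1 - t)^2) \<le> r * (c / (1 - r)^2)" by simp
  show "t * c / (1 - t^2) \<le> r * c / (1 - r^2)"
    by (rule frac_le) (use c c0 r0 tr in \<open>auto intro: mult_right_mono\<close>)
qed


theorem corollary2p3:
  fixes G H :: "complex \<Rightarrow> complex" and M1 M2 :: real
  assumes "M1 > 0" and "M2 > 0"
    and "G holomorphic_on ball 0 1" and "H holomorphic_on ball 0 1"
    and "G 0 = 0" and "H 0 = 0"
    and "deriv G 0 = 1" and "deriv H 0 = 1"
    and "\<And>z. z \<in> ball 0 1 \<Longrightarrow> cmod (G z) \<le> M1"
    and "\<And>z. z \<in> ball 0 1 \<Longrightarrow> cmod (H z) \<le> M2"
  shows "inj_on (\<lambda>z. complex_of_real ((cmod z)\<^sup>2) * G z + H z) (ball 0 (rho3 M1 M2))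
     \<and> ball 0 (sigma3 M1 M2) \<subseteq> (\<lambda>z. complex_of_real ((cmod z)\<^sup>2) * G z + H z) ` ball 0 (rho3 M1 M2)"
proof -
  note holG = assms(3) and holH = assms(4)
  have gb: "\<And>z. z \<in> ball 0 1 \<Longrightarrow> cmod (G z) \<le> M1" using assms(9) by blast
  have hb: "\<And>z. z \<in> ball 0 1 \<Longrightarrow> cmod (H z) \<le> M2" using assms(10) by blast
  have kG1: "1 \<le> M1" by (rule key_bounds(1)[where f=G and M=M1]) (use assms gb in auto)
  have kH1: "1 \<le> M2" by (rule key_bounds(1)[where f=H and M=M2]) (use assms hb in auto)
  have kG2: "\<And>z. cmod z < 1 \<Longrightarrow> cmod (G z - z) \<le> (M1 - 1 / M1) * (cmod z)\<^sup>2 / (1 - cmod z)"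
    by (rule key_bounds(2)[where f=G and M=M1]) (use assms gb in auto)
  have kH2: "\<And>z. cmod z < 1 \<Longrightarrow> cmod (H z - z) \<le> (M2 - 1 / M2) * (cmod z)\<^sup>2 / (1 - cmod z)"
    by (rule key_bounds(2)[where f=H and M=M2]) (use assms hb in auto)
  have kG3: "\<And>z. cmod z < 1 \<Longrightarrow> cmod (deriv G z) \<le> 1 + (M1 - 1 / M1) * cmod z / (1 - cmod z) + cmod z * M1 / (1 - (cmod z)\<^sup>2)"
    by (rule key_bounds(3)[where f=G and M=M1]) (use assms gb in auto)
  have kH4: "\<And>z. cmod z < 1 \<Longrightarrow> M2 * cmod z \<le> 1 \<Longrightarrow> cmod (deriv H z - 1) \<le> (M2 - 1 / M2) * cmod z / (1 - cmod z) + cmod z * ((M2 - 1 / M2) / (1 - cmod z)\<^sup>2)"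
    by (rule key_bounds(4)[where f=H and M=M2]) (use assms hb in auto)
  define F where "F z = complex_of_real ((cmod z)\<^sup>2) * G z + H z" for z
  define \<rho> where "\<rho> = rho3 M1 M2"
  define A where "A = M2 - 1/M2"
  define B where "B = M1 - 1/M1"
  have M1: "1 \<le> M1" and M2: "1 \<le> M2" using kG1 kH1 .
  have "1/M2 \<le> 1" "1/M1 \<le> 1" using M1 M2 by simp_all
  hence A0: "0 \<le> A" and B0: "0 \<le> B" unfolding A_def B_def using M1 M2 by linarith+
  note rf = rho3_facts[OF A0[unfolded A_def] B0[unfolded B_def], folded \<rho>_def]
  have \<rho>1: "\<rho> < 1" using rf(2) by simp
  have inj: "inj_on F (ball 0 \<rho>)"
  proof (rule inj_onI)
    fix z1 z2 assume z1: "z1 \<in> ball 0 \<rho>" and z2: "z2 \<in> ball 0 \<rho>" and eq: "F z1 = F z2"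
    define r where "r = max (cmod z1) (cmod z2)"
    have rr: "r < \<rho>" and n1: "cmod z1 \<le> r" and n2: "cmod z2 \<le> r"
      using z1 z2 by (auto simp: r_def)
    have r0: "0 \<le> r" using n1 norm_ge_zero[of z1] by linarith
    have rh: "r \<le> 1/2" using rr rf(2) by simp
    have r1: "r < 1" using rh by simp
    have pos: "0 < rho3_eq M1 M2 r" using rf(4)[OF r0 rr] .
    have M2r: "M2 * r \<le> 1" using ineqM2[OF A0[unfolded A_def] B0[unfolded B_def] M2 r0 rh pos] .
    define K where "K = cball (0::complex) r"
    have K1: "K \<subseteq> ball 0 1" using r1 by (auto simp: K_def)
    have cvx: "convex K" by (simp add: K_def)
    have z1K: "z1 \<in> K" and z2K: "z2 \<in> K" using n1 n2 by (auto simp: K_def)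
    define LH where "LH = A * r / (1 - r) + r * (A / (1 - r)^2)"
    define LG where "LG = 1 + B * r / (1 - r) + r * M1 / (1 - r^2)"
    define GM where "GM = r + B * r^2 / (1 - r)"
    have bH: "cmod (deriv H w - 1) \<le> LH" if "w \<in> K" for w
    proof -
      have t: "cmod w \<le> r" using that by (simp add: K_def)
      have "cmod (deriv H w - 1) \<le> A * cmod w / (1 - cmod w) + cmod w * (A / (1 - cmod w)^2)"
        unfolding A_def
      proof (rule kH4)
        show "cmod w < 1" using t r1 by simp
        show "M2 * cmod w \<le> 1" using M2r t M2 by (meson dual_order.trans mult_left_mono zero_le_one order.trans)
      qed
      also have "\<dots> \<le> LH" unfolding LH_def
        using mono_frac(1,3)[OF norm_ge_zero t r1 A0] by linarith
      finally show ?thesis .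
    qed
    have bG: "cmod (deriv G w) \<le> LG" if "w \<in> K" for w
    proof -
      have t: "cmod w \<le> r" using that by (simp add: K_def)
      have "cmod (deriv G w) \<le> 1 + B * cmod w / (1 - cmod w) + cmod w * M1 / (1 - (cmod w)^2)"
        unfolding B_def by (rule kG3) (use t r1 in simp)
      also have "\<dots> \<le> LG" unfolding LG_def
        using mono_frac(1)[OF norm_ge_zero t r1 B0] mono_frac(4)[OF norm_ge_zero t r1, of M1] M1 by linarith
      finally show ?thesis .
    qed
    have bGM: "cmod (G w) \<le> GM" if "w \<in> K" for w
    proof -
      have t: "cmod w \<le> r" using that by (simp add: K_def)
      have "cmod (G w - w) \<le> B * (cmod w)^2 / (1 - cmod w)"
        unfolding B_def by (rule kG2) (use t r1 in simp)
      moreover have "cmod (G w) \<le> cmod w + cmod (G w - w)"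
        using norm_triangle_ineq[of w "G w - w"] by simp
      ultimately show ?thesis unfolding GM_def
        using mono_frac(2)[OF norm_ge_zero t r1 B0] t by linarith
    qed
    have dH: "((\<lambda>w. H w - w) has_field_derivative (deriv H w - 1)) (at w within K)" if "w \<in> K" for w
      using K1 that by (intro derivative_intros holomorphic_derivI[OF holH]) auto
    have dG: "(G has_field_derivative (deriv G w)) (at w within K)" if "w \<in> K" for w
      using K1 that by (intro holomorphic_derivI[OF holG]) auto
    have LipH: "cmod ((H z2 - z2) - (H z1 - z1)) \<le> LH * cmod (z2 - z1)"
      by (rule field_differentiable_bound[OF cvx dH bH z2K z1K])
    have LipG: "cmod (G z2 - G z1) \<le> LG * cmod (z2 - z1)"
      by (rule field_differentiable_bound[OF cvx dG bG z2K z1K])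
    define X where "X = (H z2 - z2) - (H z1 - z1)"
    define Y where "Y = complex_of_real ((cmod z2)^2) * (G z2 - G z1)"
    define Z where "Z = complex_of_real ((cmod z2)^2 - (cmod z1)^2) * G z1"
    have e: "z2 - z1 = (F z2 - F z1) - (X + Y + Z)"
      by (simp add: F_def X_def Y_def Z_def algebra_simps)
    have "cmod (z2 - z1) \<le> cmod (F z2 - F z1) + cmod (X + Y + Z)"
      unfolding e by (rule norm_triangle_ineq4)
    also have "cmod (X + Y + Z) \<le> cmod X + cmod Y + cmod Z"
      by (metis add_mono norm_triangle_ineq order_trans order_refl)
    finally have tri: "cmod (z2 - z1) \<le> cmod X + cmod Y + cmod Z" using eq by simp
    have nY: "cmod Y \<le> r^2 * (LG * cmod (z2 - z1))"
    proof -
      have "cmod Y = (cmod z2)^2 * cmod (G z2 - G z1)" unfolding Y_def norm_mult norm_of_real by simp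
      also have "\<dots> \<le> r^2 * (LG * cmod (z2 - z1))"
        using LipG n2 by (intro mult_mono power_mono) auto
      finally show ?thesis .
    qed
    have nZ: "cmod Z \<le> (2 * r * cmod (z2 - z1)) * GM"
    proof -
      have "\<bar>(cmod z2)^2 - (cmod z1)^2\<bar> = \<bar>cmod z2 - cmod z1\<bar> * (cmod z2 + cmod z1)"
      proof -
        have "(cmod z2)^2 - (cmod z1)^2 = (cmod z2 - cmod z1) * (cmod z2 + cmod z1)"
          by (simp add: power2_eq_square algebra_simps)
        thus ?thesis by (simp add: abs_mult)
      qed
      also have "\<dots> \<le> cmod (z2 - z1) * (2 * r)"
        using norm_triangle_ineq3[of z2 z1] n1 n2 by (intro mult_mono) auto
      finally have h: "\<bar>(cmod z2)^2 - (cmod z1)^2\<bar> \<le> 2 * r * cmod (z2 - z1)" by (simp add: mult.commute)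
      have "cmod Z = \<bar>(cmod z2)^2 - (cmod z1)^2\<bar> * cmod (G z1)" unfolding Z_def norm_mult norm_of_real by simp
      also have "\<dots> \<le> (2 * r * cmod (z2 - z1)) * GM"
        using h bGM[OF z1K] by (intro mult_mono) auto
      finally show ?thesis .
    qed
    have "cmod (z2 - z1) * (1 - LH - r^2 * LG - 2 * r * GM) \<le> 0"
      using tri LipH[folded X_def] nY nZ by (simp add: algebra_simps)
    moreover have "0 < 1 - LH - r^2 * LG - 2 * r * GM"
      using ineqU[OF A0[unfolded A_def] B0[unfolded B_def] M1 r0 rh pos]
      unfolding LH_def LG_def GM_def A_def B_def .
    ultimately have "cmod (z2 - z1) \<le> 0" by (simp add: mult_le_0_iff)
    thus "z1 = z2" by simp
  qed
  define \<sigma> where "\<sigma> = sigma3 M1 M2"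
  have \<sigma>_eq: "\<sigma> = \<rho> - \<rho>^2 - A * (\<rho>^2 / (1 - \<rho>)) - B * (\<rho>^3 / (1 - \<rho>))"
    by (simp add: \<sigma>_def sigma3_def Let_def \<rho>_def A_def B_def)
  have cb: "cball 0 \<rho> \<subseteq> ball (0::complex) 1" using \<rho>1 by auto
  have contG: "continuous_on (cball 0 \<rho>) G"
    using holomorphic_on_imp_continuous_on[OF holG] cb continuous_on_subset by blast
  have contH: "continuous_on (cball 0 \<rho>) H"
    using holomorphic_on_imp_continuous_on[OF holH] cb continuous_on_subset by blast
  have contF: "continuous_on (cball 0 \<rho>) F"
    unfolding F_def[abs_def] by (intro continuous_intros contG contH)
  have openV: "open (F ` ball 0 \<rho>)"
    by (rule invariance_of_domain[OF continuous_on_subset[OF contF] open_ball inj]) auto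
  have closedW: "closed (F ` cball 0 \<rho>)"
    by (rule compact_imp_closed[OF compact_continuous_image[OF contF compact_cball]])
  have clV: "closure (F ` ball 0 \<rho>) \<subseteq> F ` cball 0 \<rho>"
    by (rule closure_minimal[OF _ closedW]) auto
  have bnd: "\<sigma> \<le> cmod (F z)" if z: "cmod z = \<rho>" for z
  proof -
    have zl: "cmod z < 1" using z \<rho>1 by simp
    have h1: "cmod (H z - z) \<le> A * \<rho>^2 / (1 - \<rho>)" using kH2[OF zl] z by (simp add: A_def)
    have g1: "cmod (G z - z) \<le> B * \<rho>^2 / (1 - \<rho>)" using kG2[OF zl] z by (simp add: B_def)
    have "cmod z \<le> cmod (H z) + cmod (H z - z)"
      using norm_triangle_ineq4[of "H z" "H z - z"] by simp
    hence hH: "\<rho> - A * \<rho>^2 / (1 - \<rho>) \<le> cmod (H z)" using h1 z by linarith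
    have "cmod (G z) \<le> cmod z + cmod (G z - z)"
      using norm_triangle_ineq[of z "G z - z"] by simp
    hence hG: "cmod (G z) \<le> \<rho> + B * \<rho>^2 / (1 - \<rho>)" using g1 z by linarith
    have "cmod (H z) \<le> cmod (F z) + cmod (complex_of_real ((cmod z)\<^sup>2) * G z)"
      unfolding F_def using norm_triangle_ineq4[of "complex_of_real ((cmod z)\<^sup>2) * G z + H z" "complex_of_real ((cmod z)\<^sup>2) * G z"]
      by simp
    moreover have "cmod (complex_of_real ((cmod z)\<^sup>2) * G z) \<le> \<rho>^2 * (\<rho> + B * \<rho>^2 / (1 - \<rho>))"
      unfolding norm_mult norm_of_real using hG z by (simp add: mult_left_mono)
    ultimately have "\<rho> - A * \<rho>^2 / (1 - \<rho>) - \<rho>^2 * (\<rho> + B * \<rho>^2 / (1 - \<rho>)) \<le> cmod (F z)"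
      using hH by linarith
    moreover have "\<sigma> \<le> \<rho> - A * \<rho>^2 / (1 - \<rho>) - \<rho>^2 * (\<rho> + B * \<rho>^2 / (1 - \<rho>))"
      unfolding \<sigma>_eq A_def B_def
      by (rule ineqC[OF B0[unfolded B_def]]) (use rf in auto)
    ultimately show ?thesis by linarith
  qed
  have cover: "ball 0 \<sigma> \<subseteq> F ` ball 0 \<rho>"
  proof (rule ccontr)
    assume "\<not> ball 0 \<sigma> \<subseteq> F ` ball 0 \<rho>"
    hence ne2: "ball 0 \<sigma> - F ` ball 0 \<rho> \<noteq> {}" by blast
    then obtain x where "x \<in> ball 0 \<sigma> - F ` ball 0 \<rho>" using ex_in_conv by metis
    hence "cmod x < \<sigma>" by simp
    hence "0 < \<sigma>" using norm_ge_zero[of x] by linarith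
    moreover have "F 0 = 0" by (simp add: F_def assms(6))
    moreover have "0 \<in> ball (0::complex) \<rho>" using rf(1) by simp
    ultimately have "(0::complex) \<in> ball 0 \<sigma> \<inter> F ` ball 0 \<rho>"
      using rev_image_eqI[of 0 "ball 0 \<rho>" 0 F] by simp
    hence ne1: "ball 0 \<sigma> \<inter> F ` ball 0 \<rho> \<noteq> {}" by blast
    obtain p where p: "p \<in> ball 0 \<sigma>" "p \<in> frontier (F ` ball 0 \<rho>)"
      using connected_Int_frontier[OF connected_ball ne1 ne2] by blast
    have pV: "p \<notin> F ` ball 0 \<rho>" using p(2) openV by (simp add: frontier_def interior_open)
    have "p \<in> F ` cball 0 \<rho>" using p(2) clV by (auto simp: frontier_def)
    then obtain z where z: "cmod z \<le> \<rho>" "p = F z" by auto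
    have "cmod z = \<rho>" using z pV by force
    hence "\<sigma> \<le> cmod p" using bnd z by simp
    thus False using p(1) by simp
  qed
  show ?thesis using inj cover unfolding F_def[abs_def] \<rho>_def \<sigma>_def by simp
qed

end
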